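(* Let $f,g:\mathbb{R}^d\to\mathbb{R}$ be measurable with $\exp(-g)\in L_1(\mathbb{R}^d)$, $\exp(-f)$ essentially bounded from above, and $\int\exp(-f(x)-g(x))\,\mathrm dx>0$. For $\eta>0$ define the probability densities $$\pi_\eta^X(x)\propto\int\exp\Big[-f(x)-g(y)-\frac{1}{2\eta}\|x-y\|_2^2\Big]\mathrm dy,\qquad \nu(x)\propto\exp[-f(x)-g(x)].$$ Then $\lim_{\eta\to0}\mathrm{TV}(\pi_\eta^X,\nu)=0$.
   Context: $\mathrm{TV}(\mu,\nu)=\frac12\|\mu-\nu\|_1$ for probability densities $\mu,\nu$. *)

theory Defs
  imports "HOL-Analysis.Analysis"
begin

definition piX_unnorm :: "('a::euclidean_space \<Rightarrow> real) \<Rightarrow> ('a \<Rightarrow> real) \<Rightarrow> real \<Rightarrow> 'a \<Rightarrow> real" where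
  "piX_unnorm f g \<eta> x =
     (\<integral>y. exp (- f x - g y - (norm (x - y))\<^sup>2 / (2 * \<eta>)) \<partial>lborel)"

definition piX :: "('a::euclidean_space \<Rightarrow> real) \<Rightarrow> ('a \<Rightarrow> real) \<Rightarrow> real \<Rightarrow> 'a \<Rightarrow> real" where
  "piX f g \<eta> x = piX_unnorm f g \<eta> x / (\<integral>z. piX_unnorm f g \<eta> z \<partial>lborel)"

definition nu_dens :: "('a::euclidean_space \<Rightarrow> real) \<Rightarrow> ('a \<Rightarrow> real) \<Rightarrow> 'a \<Rightarrow> real" where
  "nu_dens f g x = exp (- f x - g x) / (\<integral>z. exp (- f z - g z) \<partial>lborel)"

definition TV :: "('a::euclidean_space \<Rightarrow> real) \<Rightarrow> ('a \<Rightarrow> real) \<Rightarrow> real" where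
  "TV \<mu> \<nu> = (1/2) * (\<integral>x. \<bar>\<mu> x - \<nu> x\<bar> \<partial>lborel)"

end

theory Submission
  imports Defs "HOL-Probability.Distributions"
begin


lemma nn_integral_translate:
  fixes z :: "'a::euclidean_space" and f :: "'a \<Rightarrow> ennreal"
  assumes [measurable]: "f \<in> borel_measurable borel"
  shows "(\<integral>\<^sup>+x. f (x + z) \<partial>lborel) = (\<integral>\<^sup>+x. f x \<partial>lborel)"
proof -
  have "(\<integral>\<^sup>+x. f x \<partial>lborel) = (\<integral>\<^sup>+x. f x \<partial>(distr lborel borel ((+) z)))"
    by (simp add: lborel_distr_plus)
  also have "\<dots> = (\<integral>\<^sup>+x. f (z + x) \<partial>lborel)"
    by (rule nn_integral_distr) auto
  finally show ?thesis by (simp add: add.commute)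
qed

lemma integrable_translate:
  fixes z :: "'a::euclidean_space" and f :: "'a \<Rightarrow> real"
  assumes "integrable lborel f"
  shows "integrable lborel (\<lambda>x. f (x + z))"
proof -
  have [measurable]: "f \<in> borel_measurable borel" using assms by auto
  have "integrable (distr lborel borel ((+) z)) f" by (simp add: lborel_distr_plus assms)
  then have "integrable lborel (\<lambda>x. f (z + x))"
    by (subst (asm) integrable_distr_eq) auto
  then show ?thesis by (simp add: add.commute)
qed

lemma integral_translate:
  fixes z :: "'a::euclidean_space" and f :: "'a \<Rightarrow> real"
  assumes [measurable]: "f \<in> borel_measurable borel"
  shows "(\<integral>x. f (x + z) \<partial>lborel) = (\<integral>x. f x \<partial>lborel)"
proof -
  have "(\<integral>x. f x \<partial>lborel) = (\<integral>x. f x \<partial>(distr lborel borel ((+) z)))"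
    by (simp add: lborel_distr_plus)
  also have "\<dots> = (\<integral>x. f (z + x) \<partial>lborel)"
    by (rule integral_distr) auto
  finally show ?thesis by (simp add: add.commute)
qed

lemma nn_integral_scale:
  fixes f :: "'a::euclidean_space \<Rightarrow> ennreal" and \<sigma> :: real
  assumes [measurable]: "f \<in> borel_measurable borel" and "\<sigma> > 0"
  shows "(\<integral>\<^sup>+x. f x \<partial>lborel) = ennreal (\<sigma> ^ DIM('a)) * (\<integral>\<^sup>+x. f (\<sigma> *\<^sub>R x) \<partial>lborel)"
proof -
  have "(\<integral>\<^sup>+x. f x \<partial>lborel) =
     (\<integral>\<^sup>+x. f x \<partial>(density (distr lborel borel (\<lambda>x. 0 + \<sigma> *\<^sub>R x)) (\<lambda>_. \<bar>\<sigma>\<bar>^DIM('a))))"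
    using lborel_affine[of \<sigma> "0::'a"] \<open>\<sigma> > 0\<close> by simp
  also have "\<dots> = (\<integral>\<^sup>+x. ennreal (\<bar>\<sigma>\<bar>^DIM('a)) * f x \<partial>(distr lborel borel (\<lambda>x. 0 + \<sigma> *\<^sub>R x)))"
    by (subst nn_integral_density) auto
  also have "\<dots> = (\<integral>\<^sup>+x. ennreal (\<bar>\<sigma>\<bar>^DIM('a)) * f (0 + \<sigma> *\<^sub>R x) \<partial>lborel)"
    by (subst nn_integral_distr) auto
  also have "\<dots> = ennreal (\<sigma> ^ DIM('a)) * (\<integral>\<^sup>+x. f (\<sigma> *\<^sub>R x) \<partial>lborel)"
    using \<open>\<sigma> > 0\<close> by (subst nn_integral_cmult) auto
  finally show ?thesis .
qed

definition tc :: "('a::euclidean_space \<Rightarrow> real) \<Rightarrow> bool" where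
  "tc h \<longleftrightarrow> (\<forall>e>0. \<exists>\<delta>>0. \<forall>z. norm z < \<delta> \<longrightarrow> (\<integral>x. \<bar>h (x + z) - h x\<bar> \<partial>lborel) < e)"

lemma tc_approx:
  fixes h :: "'a::euclidean_space \<Rightarrow> real"
  assumes h: "integrable lborel h"
    and approx: "\<And>e. e > 0 \<Longrightarrow> \<exists>s. integrable lborel s \<and> tc s \<and> (\<integral>x. \<bar>h x - s x\<bar> \<partial>lborel) < e"
  shows "tc h"
  unfolding tc_def
proof (intro allI impI)
  fix e :: real assume "e > 0"
  then obtain s where s: "integrable lborel s" "tc s" "(\<integral>x. \<bar>h x - s x\<bar> \<partial>lborel) < e/3"
    using approx[of "e/3"] by auto
  then obtain \<delta> where \<delta>: "\<delta> > 0" "\<And>z. norm z < \<delta> \<Longrightarrow> (\<integral>x. \<bar>s (x + z) - s x\<bar> \<partial>lborel) < e/3"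
    using \<open>e > 0\<close> unfolding tc_def by (meson divide_pos_pos zero_less_numeral)
  have [measurable]: "h \<in> borel_measurable borel" "s \<in> borel_measurable borel" using h s by auto
  show "\<exists>\<delta>>0. \<forall>z. norm z < \<delta> \<longrightarrow> (\<integral>x. \<bar>h (x + z) - h x\<bar> \<partial>lborel) < e"
  proof (intro exI conjI allI impI)
    fix z :: 'a assume z: "norm z < \<delta>"
    have i1: "integrable lborel (\<lambda>x. \<bar>h (x + z) - s (x + z)\<bar>)"
      using integrable_translate[of "\<lambda>x. \<bar>h x - s x\<bar>" z] h s by auto
    have i2: "integrable lborel (\<lambda>x. \<bar>s (x + z) - s x\<bar>)"
      using integrable_translate[of s z] s by auto
    have i3: "integrable lborel (\<lambda>x. \<bar>s x - h x\<bar>)" using h s by auto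
    have "(\<integral>x. \<bar>h (x + z) - h x\<bar> \<partial>lborel) \<le>
        (\<integral>x. \<bar>h (x + z) - s (x + z)\<bar> + \<bar>s (x + z) - s x\<bar> + \<bar>s x - h x\<bar> \<partial>lborel)"
      by (rule integral_mono) (use i1 i2 i3 integrable_translate[OF h, of z] h in auto)
    also have "\<dots> = (\<integral>x. \<bar>h (x + z) - s (x + z)\<bar> \<partial>lborel) + (\<integral>x. \<bar>s (x + z) - s x\<bar> \<partial>lborel)
        + (\<integral>x. \<bar>s x - h x\<bar> \<partial>lborel)"
      using i1 i2 i3 by simp
    also have "(\<integral>x. \<bar>h (x + z) - s (x + z)\<bar> \<partial>lborel) = (\<integral>x. \<bar>h x - s x\<bar> \<partial>lborel)"
      by (rule integral_translate[of "\<lambda>x. \<bar>h x - s x\<bar>"]) auto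
    also have "(\<integral>x. \<bar>s x - h x\<bar> \<partial>lborel) = (\<integral>x. \<bar>h x - s x\<bar> \<partial>lborel)"
      by (simp add: abs_minus_commute)
    finally show "(\<integral>x. \<bar>h (x + z) - h x\<bar> \<partial>lborel) < e"
      using s(3) \<delta>(2)[OF z] by linarith
  qed (use \<delta> in auto)
qed

lemma tc_indicator_bounded:
  fixes A :: "'a::euclidean_space set"
  assumes A[measurable]: "A \<in> sets borel" and bA: "bounded A"
  shows "tc (indicator A :: 'a \<Rightarrow> real)"
  unfolding tc_def
proof (intro allI impI)
  fix e :: real assume e: "e > 0"
  obtain U where U: "open U" "A \<subseteq> U" "emeasure lborel (U - A) < ennreal (e/4)"
    using outer_regular_lborel[OF A, of "e/4"] e by auto
  have "- A \<in> sets borel" by auto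
  then obtain V where V: "open V" "- A \<subseteq> V" "emeasure lborel (V - (- A)) < ennreal (e/4)"
    using outer_regular_lborel[of "-A" "e/4"] e by auto
  define T where "T = - V"
  have TA: "T \<subseteq> A" using V T_def by auto
  have cT: "compact T" using TA bA V(1) unfolding T_def
    by (meson bounded_subset closed_Compl compact_eq_bounded_closed)
  have [measurable]: "T \<in> sets borel" "U \<in> sets borel" using V U unfolding T_def by auto
  have AT: "A - T = V - (- A)" unfolding T_def by auto
  have "emeasure lborel (U - T) \<le> emeasure lborel ((U - A) \<union> (A - T))"
    by (rule emeasure_mono) auto
  also have "\<dots> \<le> emeasure lborel (U - A) + emeasure lborel (A - T)"
    by (rule emeasure_subadditive) auto
  also have "\<dots> < ennreal (e/4 + e/4)"
  proof -
    have "emeasure lborel (A - T) < ennreal (e/4)" using V(3) AT by simp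
    then show ?thesis using add_mono_ennreal[OF U(3)] by blast
  qed
  also have "e/4 + e/4 = e/2" by simp
  finally have UT: "emeasure lborel (U - T) < ennreal (e/2)" .
  then have UTfin: "emeasure lborel (U - T) < \<infinity>" by (metis ennreal_less_top infinity_ennreal_def less_trans)
  have mUT: "measure lborel (U - T) < e/2"
  proof -
    have "emeasure lborel (U - T) = ennreal (measure lborel (U - T))"
      using UTfin by (intro emeasure_eq_ennreal_measure) auto
    then have "ennreal (measure lborel (U - T)) < ennreal (e/2)" using UT by simp
    then show ?thesis using e by (subst (asm) ennreal_less_iff) auto
  qed
  obtain d where d: "d > 0" "\<And>x y. x \<in> T \<Longrightarrow> y \<in> - U \<Longrightarrow> d \<le> dist x y"
  proof -
    have "closed (- U)" "T \<inter> - U = {}" using U(1,2) TA by auto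
    from separate_compact_closed[OF cT this] show ?thesis using that by auto
  qed
  show "\<exists>\<delta>>0. \<forall>z. norm z < \<delta> \<longrightarrow> (\<integral>x. \<bar>indicator A (x + z) - indicator A x\<bar> \<partial>lborel) < e"
  proof (intro exI conjI allI impI)
    fix z :: 'a assume z: "norm z < d"
    have close: "y \<in> U" if "x \<in> T" "dist x y < d" for x y
    proof (rule ccontr)
      assume "y \<notin> U"
      then have "d \<le> dist x y" using d(2) that by auto
      then show False using that by linarith
    qed
    have pw: "\<bar>indicator A (x + z) - indicator A x\<bar> \<le> (indicator (U - T) x + indicator (U - T) (x + z) :: real)"
      for x :: 'a
    proof -
      have dz: "dist x (x + z) < d" "dist (x + z) x < d" using z by (auto simp: dist_norm)
      show ?thesis
        using close[OF _ dz(1)] close[OF _ dz(2)] TA U(2)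
        by (cases "x \<in> A"; cases "x + z \<in> A"; cases "x \<in> T"; cases "x + z \<in> T") (auto simp: indicator_def)
    qed
    have iUT: "integrable lborel (indicator (U - T) :: 'a \<Rightarrow> real)"
      using UTfin by auto
    have iUT': "integrable lborel (\<lambda>x. indicator (U - T) (x + z) :: real)"
      using integrable_translate[OF iUT] .
    have "(\<integral>x. \<bar>indicator A (x + z) - indicator A x\<bar> \<partial>lborel) \<le>
        (\<integral>x. indicator (U - T) x + indicator (U - T) (x + z) \<partial>lborel :: real)"
    proof (rule integral_mono)
      have iA: "integrable lborel (indicator A :: 'a \<Rightarrow> real)"
        using emeasure_bounded_finite[OF bA] by auto
      show "integrable lborel (\<lambda>x. \<bar>indicator A (x + z) - indicator A x\<bar> :: real)"
        using integrable_translate[OF iA, of z] iA by auto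
    qed (use pw iUT iUT' in auto)
    also have "\<dots> = (\<integral>x. indicator (U - T) x \<partial>lborel) + (\<integral>x. indicator (U - T) (x + z) \<partial>lborel :: real)"
      using iUT iUT' by simp
    also have "(\<integral>x. indicator (U - T) (x + z) \<partial>lborel) = (\<integral>x. indicator (U - T) x \<partial>lborel :: real)"
      by (rule integral_translate) auto
    also have "(\<integral>x. indicator (U - T) x \<partial>lborel :: real) = measure lborel (U - T)" by simp
    finally show "(\<integral>x. \<bar>indicator A (x + z) - indicator A x\<bar> \<partial>lborel :: real) < e"
      using mUT by linarith
  qed (use d in auto)
qed

lemma tc_limit:
  fixes h :: "'a::euclidean_space \<Rightarrow> real"
  assumes h: "integrable lborel h" and s: "\<And>n. integrable lborel (s n)" "\<And>n. tc (s n)"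
    and lim: "\<And>x. (\<lambda>n. s n x) \<longlonglongrightarrow> h x"
    and w: "integrable lborel w" "\<And>n x. \<bar>s n x\<bar> \<le> w x"
  shows "tc h"
proof (rule tc_approx[OF h])
  fix e :: real assume e: "e > 0"
  have "(\<lambda>n. \<integral>x. \<bar>h x - s n x\<bar> \<partial>lborel) \<longlonglongrightarrow> (\<integral>x. 0 \<partial>(lborel :: 'a measure) :: real)"
  proof (rule integral_dominated_convergence[where w="\<lambda>x. \<bar>h x\<bar> + w x"])
    show "integrable lborel (\<lambda>x. \<bar>h x\<bar> + w x)" using h w by auto
    show "(\<lambda>x. \<bar>h x - s n x\<bar>) \<in> borel_measurable lborel" for n using h s by auto
    show "AE x in lborel. (\<lambda>n. \<bar>h x - s n x\<bar>) \<longlonglongrightarrow> 0"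
    proof (rule AE_I2)
      fix x
      have "(\<lambda>n. h x - s n x) \<longlonglongrightarrow> h x - h x" by (intro tendsto_intros lim)
      then have "(\<lambda>n. \<bar>h x - s n x\<bar>) \<longlonglongrightarrow> \<bar>h x - h x\<bar>" by (rule tendsto_rabs)
      then show "(\<lambda>n. \<bar>h x - s n x\<bar>) \<longlonglongrightarrow> 0" by simp
    qed
    show "AE x in lborel. norm \<bar>h x - s n x\<bar> \<le> \<bar>h x\<bar> + w x" for n
    proof (intro AE_I2)
      fix x
      have "\<bar>s n x\<bar> \<le> w x" by (rule w(2))
      then show "norm \<bar>h x - s n x\<bar> \<le> \<bar>h x\<bar> + w x" by simp
    qed
  qed auto
  then have "(\<lambda>n. \<integral>x. \<bar>h x - s n x\<bar> \<partial>lborel) \<longlonglongrightarrow> 0" by simp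
  from LIMSEQ_D[OF this e] obtain N where N: "\<And>n. n \<ge> N \<Longrightarrow> norm ((\<integral>x. \<bar>h x - s n x\<bar> \<partial>lborel) - 0) < e"
    by blast
  have "(\<integral>x. \<bar>h x - s N x\<bar> \<partial>lborel) < e"
    using N[of N] abs_ge_self[of "\<integral>x. \<bar>h x - s N x\<bar> \<partial>lborel"] by simp
  then obtain n where "(\<integral>x. \<bar>h x - s n x\<bar> \<partial>lborel) < e" by blast
  then show "\<exists>s. integrable lborel s \<and> tc s \<and> (\<integral>x. \<bar>h x - s x\<bar> \<partial>lborel) < e"
    using s by blast
qed

lemma tc_indicator:
  fixes A :: "'a::euclidean_space set"
  assumes A[measurable]: "A \<in> sets borel" and fin: "emeasure lborel A < \<infinity>"
  shows "tc (indicator A :: 'a \<Rightarrow> real)"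
proof -
  have iA: "integrable lborel (indicator A :: 'a \<Rightarrow> real)" using fin by (intro integrable_real_indicator) auto
  show ?thesis
proof (rule tc_limit[where s="\<lambda>n. indicator (A \<inter> cball 0 (real n))" and w="indicator A"])
  show "integrable lborel (indicator (A \<inter> cball 0 (real n)) :: 'a \<Rightarrow> real)" for n
  proof -
    have "emeasure lborel (A \<inter> cball 0 (real n)) < \<infinity>"
      by (rule emeasure_bounded_finite) (simp add: bounded_Int)
    then show ?thesis by (intro integrable_real_indicator) auto
  qed
  show "tc (indicator (A \<inter> cball 0 (real n)) :: 'a \<Rightarrow> real)" for n
    by (rule tc_indicator_bounded) auto
  show "(\<lambda>n. indicator (A \<inter> cball 0 (real n)) x :: real) \<longlonglongrightarrow> indicator A x" for x
  proof (rule tendsto_eventually)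
    obtain N :: nat where "norm x \<le> real N" using real_arch_simple by blast
    then have "\<forall>n\<ge>N. indicator (A \<inter> cball 0 (real n)) x = (indicator A x :: real)"
      by (auto simp: indicator_def dist_norm)
    then show "\<forall>\<^sub>F n in sequentially. indicator (A \<inter> cball 0 (real n)) x = (indicator A x :: real)"
      by (auto simp: eventually_sequentially)
  qed
  show "\<bar>indicator (A \<inter> cball 0 (real n)) x\<bar> \<le> (indicator A x :: real)" for n x
    by (auto simp: indicator_def)
qed (use iA in auto)
qed

lemma tc_cmult:
  fixes h :: "'a::euclidean_space \<Rightarrow> real"
  assumes "tc h"
  shows "tc (\<lambda>x. h x * c)"
  unfolding tc_def
proof (intro allI impI)
  fix e :: real assume e: "e > 0"
  have e': "e / (\<bar>c\<bar> + 1) > 0" using e by (intro divide_pos_pos) auto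
  obtain \<delta> where \<delta>: "\<delta> > 0" "\<And>z. norm z < \<delta> \<Longrightarrow> (\<integral>x. \<bar>h (x + z) - h x\<bar> \<partial>lborel) < e / (\<bar>c\<bar> + 1)"
    using assms e' unfolding tc_def by blast
  show "\<exists>\<delta>>0. \<forall>z. norm z < \<delta> \<longrightarrow> (\<integral>x. \<bar>h (x + z) * c - h x * c\<bar> \<partial>lborel) < e"
  proof (intro exI conjI allI impI)
    fix z :: 'a assume z: "norm z < \<delta>"
    have eq: "\<bar>h (x + z) * c - h x * c\<bar> = \<bar>c\<bar> * \<bar>h (x + z) - h x\<bar>" for x
    proof -
      have "h (x + z) * c - h x * c = (h (x + z) - h x) * c" by (rule left_diff_distrib[symmetric])
      then show ?thesis by (simp add: abs_mult)
    qed
    have "(\<integral>x. \<bar>h (x + z) * c - h x * c\<bar> \<partial>lborel) = \<bar>c\<bar> * (\<integral>x. \<bar>h (x + z) - h x\<bar> \<partial>lborel)"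
      unfolding eq by (rule integral_mult_right_zero)
    also have "\<dots> \<le> \<bar>c\<bar> * (e / (\<bar>c\<bar> + 1))"
      using \<delta>(2)[OF z] by (intro mult_left_mono) auto
    also have "\<dots> < e"
    proof -
      have "\<bar>c\<bar> * (e / (\<bar>c\<bar> + 1)) = e * (\<bar>c\<bar> / (\<bar>c\<bar> + 1))" by simp
      also have "\<bar>c\<bar> / (\<bar>c\<bar> + 1) < 1" by simp
      then have "e * (\<bar>c\<bar> / (\<bar>c\<bar> + 1)) < e * 1" using e by (intro mult_strict_left_mono) auto
      finally show ?thesis by simp
    qed
    finally show "(\<integral>x. \<bar>h (x + z) * c - h x * c\<bar> \<partial>lborel) < e" .
  qed (use \<delta> in auto)
qed

lemma tc_add:
  fixes f g :: "'a::euclidean_space \<Rightarrow> real"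
  assumes f: "integrable lborel f" "tc f" and g: "integrable lborel g" "tc g"
  shows "tc (\<lambda>x. f x + g x)"
  unfolding tc_def
proof (intro allI impI)
  fix e :: real assume e: "e > 0"
  then have e2: "e / 2 > 0" by simp
  obtain d1 where d1: "d1 > 0" "\<And>z. norm z < d1 \<Longrightarrow> (\<integral>x. \<bar>f (x + z) - f x\<bar> \<partial>lborel) < e / 2"
    using f(2) e2 unfolding tc_def by blast
  obtain d2 where d2: "d2 > 0" "\<And>z. norm z < d2 \<Longrightarrow> (\<integral>x. \<bar>g (x + z) - g x\<bar> \<partial>lborel) < e / 2"
    using g(2) e2 unfolding tc_def by blast
  show "\<exists>\<delta>>0. \<forall>z. norm z < \<delta> \<longrightarrow> (\<integral>x. \<bar>f (x + z) + g (x + z) - (f x + g x)\<bar> \<partial>lborel) < e"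
  proof (intro exI conjI allI impI)
    fix z :: 'a assume z: "norm z < min d1 d2"
    have z1: "norm z < d1" and z2: "norm z < d2" using z by auto
    have i1: "integrable lborel (\<lambda>x. \<bar>f (x + z) - f x\<bar>)"
      using integrable_translate[OF f(1), of z] f(1) by auto
    have i2: "integrable lborel (\<lambda>x. \<bar>g (x + z) - g x\<bar>)"
      using integrable_translate[OF g(1), of z] g(1) by auto
    have i0: "integrable lborel (\<lambda>x. \<bar>f (x + z) + g (x + z) - (f x + g x)\<bar>)"
      using integrable_translate[OF f(1), of z] integrable_translate[OF g(1), of z] f(1) g(1) by auto
    have "(\<integral>x. \<bar>f (x + z) + g (x + z) - (f x + g x)\<bar> \<partial>lborel) \<le>
        (\<integral>x. \<bar>f (x + z) - f x\<bar> + \<bar>g (x + z) - g x\<bar> \<partial>lborel)"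
      by (rule integral_mono) (use i0 i1 i2 in auto)
    also have "\<dots> = (\<integral>x. \<bar>f (x + z) - f x\<bar> \<partial>lborel) + (\<integral>x. \<bar>g (x + z) - g x\<bar> \<partial>lborel)"
      using i1 i2 by simp
    finally show "(\<integral>x. \<bar>f (x + z) + g (x + z) - (f x + g x)\<bar> \<partial>lborel) < e"
      using d1(2)[OF z1] d2(2)[OF z2] by linarith
  qed (use d1 d2 in auto)
qed

lemma tc_integrable:
  fixes h :: "'a::euclidean_space \<Rightarrow> real"
  assumes "integrable lborel h"
  shows "tc h"
  using assms
proof (induct rule: integrable_induct)
  case (base A c)
  then show ?case using tc_cmult[OF tc_indicator[of A], of c] by simp
next
  case (add f g)
  then show ?case by (rule tc_add)
next
  case (lim f s)
  show ?case
  proof (rule tc_limit[where s=s and w="\<lambda>x. 2 * \<bar>f x\<bar>"])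
    show "\<bar>s n x\<bar> \<le> 2 * \<bar>f x\<bar>" for n x using lim(4)[of x n] by simp
  qed (use lim in auto)
qed

lemma gauss1_integrable: "integrable lborel (\<lambda>x::real. exp (- x\<^sup>2))"
proof -
  have "has_bochner_integral lborel (\<lambda>x::real. exp (- x\<^sup>2)) (2 *\<^sub>R (sqrt pi / 2))"
    by (rule has_bochner_integral_even_function[OF gaussian_moment_0]) simp
  then show ?thesis by (rule integrable.intros)
qed

lemma gauss1_nn_finite: "(\<integral>\<^sup>+x. ennreal (exp (- x\<^sup>2)) \<partial>(lborel :: real measure)) < \<infinity>"
  using gauss1_integrable by (simp add: integrable_iff_bounded)

lemma gauss_prod: "ennreal (exp (- (norm w)\<^sup>2)) = (\<Prod>b\<in>Basis. ennreal (exp (- (w \<bullet> b)\<^sup>2)))"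
  for w :: "'a::euclidean_space"
proof -
  have "(norm w)\<^sup>2 = w \<bullet> w" by (rule power2_norm_eq_inner)
  also have "\<dots> = (\<Sum>b\<in>Basis. (w \<bullet> b) * (w \<bullet> b))" by (rule euclidean_inner)
  also have "\<dots> = (\<Sum>b\<in>Basis. (w \<bullet> b)\<^sup>2)" by (simp add: power2_eq_square)
  finally have "(norm w)\<^sup>2 = (\<Sum>b\<in>Basis. (w \<bullet> b)\<^sup>2)" .
  then have "exp (- (norm w)\<^sup>2) = (\<Prod>b\<in>Basis. exp (- (w \<bullet> b)\<^sup>2))"
    by (simp add: exp_sum sum_negf[symmetric])
  then show ?thesis by (simp add: prod_ennreal)
qed

lemma gauss_nn_finite: "(\<integral>\<^sup>+w. ennreal (exp (- (norm w)\<^sup>2)) \<partial>(lborel :: 'a::euclidean_space measure)) < \<infinity>"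
proof -
  have "(\<integral>\<^sup>+w. ennreal (exp (- (norm w)\<^sup>2)) \<partial>(lborel :: 'a measure)) =
      (\<integral>\<^sup>+w. (\<Prod>b\<in>Basis. ennreal (exp (- (w \<bullet> b)\<^sup>2))) \<partial>(lborel :: 'a measure))"
    by (simp add: gauss_prod)
  also have "\<dots> = (\<Prod>b\<in>(Basis :: 'a set). (\<integral>\<^sup>+x. ennreal (exp (- x\<^sup>2)) \<partial>lborel))"
    by (rule nn_integral_lborel_prod[where f="\<lambda>b x. ennreal (exp (- x\<^sup>2))"]) auto
  also have "\<dots> < \<infinity>"
    using gauss1_nn_finite by (simp add: power_less_top_ennreal)
  finally show ?thesis .
qed

lemma gauss_integrable: "integrable lborel (\<lambda>w::'a::euclidean_space. exp (- (norm w)\<^sup>2))"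
  using gauss_nn_finite by (simp add: integrable_iff_bounded)

definition KK :: "real \<Rightarrow> 'a::euclidean_space \<Rightarrow> real" where
  "KK \<eta> z = exp (- (norm z)\<^sup>2 / (2 * \<eta>))"

definition c0 :: "'a::euclidean_space itself \<Rightarrow> real" where
  "c0 _ = (\<integral>w. exp (- (norm w)\<^sup>2) \<partial>(lborel :: 'a measure))"

definition cK :: "real \<Rightarrow> 'a::euclidean_space itself \<Rightarrow> real" where
  "cK \<eta> _ = sqrt (2 * \<eta>) ^ DIM('a) * c0 TYPE('a)"

lemma KK_measurable[measurable]: "KK \<eta> \<in> borel_measurable borel"
  unfolding KK_def[abs_def] by measurable

lemma KK_pos: "KK \<eta> z > 0" by (simp add: KK_def)

lemma KK_le1: "\<eta> > 0 \<Longrightarrow> KK \<eta> z \<le> 1" by (simp add: KK_def)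

lemma KK_uminus: "KK \<eta> (- z) = KK \<eta> z" by (simp add: KK_def)

lemma c0_pos: "c0 TYPE('a::euclidean_space) > 0"
proof -
  let ?I = "(\<integral>w. exp (- (norm w)\<^sup>2) \<partial>(lborel :: 'a measure))"
  have ge: "?I \<ge> 0" by (intro integral_nonneg_AE) auto
  have nf: "\<not> (AE x in (lborel::'a measure). False)"
  proof
    assume "AE x in (lborel::'a measure). False"
    then have "UNIV \<in> null_sets (lborel::'a measure)" using AE_iff_null_sets[of UNIV "lborel::'a measure"] by simp
    then have "emeasure (lborel::'a measure) UNIV = 0" by auto
    then show False by simp
  qed
  have "\<not> (AE x in lborel. exp (- (norm (x::'a))\<^sup>2) = 0)"
    using nf by simp
  then have "?I \<noteq> 0"
    using integral_nonneg_eq_0_iff_AE[OF gauss_integrable[where 'a='a]] by auto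
  with ge have "0 < ?I" by linarith
  then show ?thesis by (simp add: c0_def)
qed

lemma gauss_nn_eq: "(\<integral>\<^sup>+w. ennreal (exp (- (norm w)\<^sup>2)) \<partial>(lborel :: 'a::euclidean_space measure)) = ennreal (c0 TYPE('a))"
  unfolding c0_def by (rule nn_integral_eq_integral) (auto intro: gauss_integrable)

lemma KK_nn:
  assumes "\<eta> > 0"
  shows "(\<integral>\<^sup>+z. ennreal (KK \<eta> z) \<partial>(lborel :: 'a::euclidean_space measure)) = ennreal (cK \<eta> TYPE('a))"
proof -
  define \<sigma> where "\<sigma> = sqrt (2 * \<eta>)"
  have \<sigma>: "\<sigma> > 0" "\<sigma>\<^sup>2 = 2 * \<eta>" using assms by (auto simp: \<sigma>_def)
  have eq: "KK \<eta> (\<sigma> *\<^sub>R w) = exp (- (norm w)\<^sup>2)" for w :: 'a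
  proof -
    have "(norm (\<sigma> *\<^sub>R w))\<^sup>2 = \<sigma>\<^sup>2 * (norm w)\<^sup>2" using \<sigma> by (simp add: power_mult_distrib)
    then show ?thesis using \<sigma> assms by (simp add: KK_def)
  qed
  have "(\<integral>\<^sup>+z. ennreal (KK \<eta> z) \<partial>(lborel :: 'a measure)) =
      ennreal (\<sigma> ^ DIM('a)) * (\<integral>\<^sup>+w. ennreal (KK \<eta> (\<sigma> *\<^sub>R w)) \<partial>(lborel :: 'a measure))"
    by (rule nn_integral_scale[where f="\<lambda>z. ennreal (KK \<eta> z)"]) (use \<sigma> in auto)
  also have "\<dots> = ennreal (\<sigma> ^ DIM('a)) * ennreal (c0 TYPE('a))"
    by (simp add: eq gauss_nn_eq)
  also have "\<dots> = ennreal (cK \<eta> TYPE('a))"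
    using \<sigma> c0_pos[where 'a='a] by (simp add: cK_def \<sigma>_def ennreal_mult)
  finally show ?thesis .
qed

lemma cK_pos: "\<eta> > 0 \<Longrightarrow> cK \<eta> TYPE('a::euclidean_space) > 0"
  using c0_pos[where 'a='a] by (simp add: cK_def)

lemma KK_integrable: "\<eta> > 0 \<Longrightarrow> integrable lborel (KK \<eta> :: 'a::euclidean_space \<Rightarrow> real)"
  using KK_nn[of \<eta>, where 'a='a] by (simp add: integrable_iff_bounded abs_of_pos[OF KK_pos])

lemma KK_integral: "\<eta> > 0 \<Longrightarrow> (\<integral>z. KK \<eta> z \<partial>(lborel :: 'a::euclidean_space measure)) = cK \<eta> TYPE('a)"
  using KK_nn[of \<eta>, where 'a='a] cK_pos[of \<eta>, where 'a='a]
    nn_integral_eq_integral[OF KK_integrable[of \<eta>, where 'a='a]]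
  by (auto simp: less_imp_le KK_pos)

lemma cK_double: "\<eta> > 0 \<Longrightarrow> cK (2 * \<eta>) TYPE('a::euclidean_space) = sqrt 2 ^ DIM('a) * cK \<eta> TYPE('a)"
proof -
  assume "\<eta> > 0"
  have "sqrt (2 * (2 * \<eta>)) = sqrt 2 * sqrt (2 * \<eta>)" by (simp add: real_sqrt_mult)
  then show ?thesis by (simp add: cK_def power_mult_distrib)
qed

lemma tail_integrable: "\<eta> > 0 \<Longrightarrow> integrable lborel (\<lambda>z::'a::euclidean_space. indicator {z. \<delta> \<le> norm z} z * KK \<eta> z)"
  by (rule Bochner_Integration.integrable_bound[OF KK_integrable[of \<eta>]]) (auto simp: indicator_def abs_of_pos[OF KK_pos] less_imp_le[OF KK_pos])

lemma tail_ratio: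
  assumes "\<eta> > 0" "\<delta> \<ge> 0"
  shows "(\<integral>z. indicator {z. \<delta> \<le> norm z} z * KK \<eta> z \<partial>(lborel::'a::euclidean_space measure)) / cK \<eta> TYPE('a)
     \<le> exp (- \<delta>\<^sup>2 / (4 * \<eta>)) * sqrt 2 ^ DIM('a)"
proof -
  have pw: "indicator {z. \<delta> \<le> norm z} z * KK \<eta> z \<le> exp (- \<delta>\<^sup>2 / (4 * \<eta>)) * KK (2 * \<eta>) z" for z :: 'a
  proof (cases "\<delta> \<le> norm z")
    case True
    then have "\<delta>\<^sup>2 \<le> (norm z)\<^sup>2" using assms by (intro power_mono) auto
    then have "- (norm z)\<^sup>2 / (2 * \<eta>) \<le> - \<delta>\<^sup>2 / (4 * \<eta>) + - (norm z)\<^sup>2 / (2 * (2 * \<eta>))"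
      using assms by (simp add: field_simps)
    then have "KK \<eta> z \<le> exp (- \<delta>\<^sup>2 / (4 * \<eta>)) * KK (2 * \<eta>) z"
      unfolding KK_def by (simp add: exp_add[symmetric])
    then show ?thesis using True by simp
  next
    case False
    then show ?thesis using KK_pos[of "2*\<eta>" z] by simp
  qed
  have "(\<integral>z. indicator {z. \<delta> \<le> norm z} z * KK \<eta> z \<partial>(lborel::'a measure))
      \<le> (\<integral>z. exp (- \<delta>\<^sup>2 / (4 * \<eta>)) * KK (2 * \<eta>) z \<partial>(lborel::'a measure))"
    by (rule integral_mono) (use pw tail_integrable[OF assms(1)] KK_integrable[of "2*\<eta>"] assms in auto)
  also have "\<dots> = exp (- \<delta>\<^sup>2 / (4 * \<eta>)) * cK (2 * \<eta>) TYPE('a)"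
    using KK_integral[of "2*\<eta>", where 'a='a] assms by simp
  also have "\<dots> = exp (- \<delta>\<^sup>2 / (4 * \<eta>)) * sqrt 2 ^ DIM('a) * cK \<eta> TYPE('a)"
    using cK_double[OF assms(1), where 'a='a] by simp
  finally show ?thesis
    using cK_pos[OF assms(1), where 'a='a] by (simp add: divide_le_eq)
qed

lemma conv_L1:
  fixes h :: "'a::euclidean_space \<Rightarrow> real"
  assumes h: "integrable lborel h" and \<eta>: "\<eta> > 0" and \<delta>: "\<delta> > 0" and e: "e \<ge> 0"
    and h\<delta>: "\<And>z. norm z < \<delta> \<Longrightarrow> (\<integral>x. \<bar>h (x + z) - h x\<bar> \<partial>lborel) \<le> e"
  shows "(\<integral>\<^sup>+x. ennreal \<bar>(\<integral>y. h y * KK \<eta> (x - y) \<partial>lborel) / cK \<eta> TYPE('a) - h x\<bar> \<partial>lborel)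
    \<le> ennreal (e + 2 * (\<integral>x. \<bar>h x\<bar> \<partial>lborel) *
         ((\<integral>z. indicator {z. \<delta> \<le> norm z} z * KK \<eta> z \<partial>(lborel :: 'a measure)) / cK \<eta> TYPE('a)))"
proof -
  define c where "c = cK \<eta> TYPE('a)"
  have c: "c > 0" using cK_pos[OF \<eta>] by (simp add: c_def)
  have [measurable]: "h \<in> borel_measurable borel" using h by auto
  define N where "N = (\<integral>x. \<bar>h x\<bar> \<partial>lborel)"
  define tl where "tl = (\<integral>z. indicator {z. \<delta> \<le> norm z} z * KK \<eta> z \<partial>(lborel :: 'a measure))"
  have N0: "N \<ge> 0" unfolding N_def by (intro integral_nonneg_AE) auto
  have KKi: "integrable lborel (KK \<eta> :: 'a \<Rightarrow> real)" by (rule KK_integrable[OF \<eta>])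
  have KKint: "(\<integral>z. KK \<eta> z \<partial>(lborel :: 'a measure)) = c" using KK_integral[OF \<eta>] by (simp add: c_def)
  have A: "ennreal \<bar>(\<integral>y. h y * KK \<eta> (x - y) \<partial>lborel) / c - h x\<bar>
      \<le> (\<integral>\<^sup>+z. ennreal (KK \<eta> z / c) * ennreal \<bar>h (x + z) - h x\<bar> \<partial>lborel)" for x
  proof -
    have tr: "(\<integral>y. h y * KK \<eta> (x - y) \<partial>lborel) = (\<integral>z. h (x + z) * KK \<eta> z \<partial>lborel)"
    proof -
      have "(\<integral>z. h (z + x) * KK \<eta> (x - (z + x)) \<partial>lborel) = (\<integral>y. h y * KK \<eta> (x - y) \<partial>lborel)"
      proof (rule integral_translate[of "\<lambda>y. h y * KK \<eta> (x - y)"])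
        have "(\<lambda>y. KK \<eta> (x - y)) \<in> borel_measurable borel"
          by (rule measurable_compose[OF _ KK_measurable]) simp
        then show "(\<lambda>y. h y * KK \<eta> (x - y)) \<in> borel_measurable borel" by simp
      qed
      moreover have "(\<lambda>z::'a. h (z + x) * KK \<eta> (x - (z + x))) = (\<lambda>z::'a. h (x + z) * KK \<eta> z)"
      proof
        fix z :: 'a
        have "x - (z + x) = - z" by simp
        then show "h (z + x) * KK \<eta> (x - (z + x)) = h (x + z) * KK \<eta> z"
          by (simp only: KK_uminus add.commute)
      qed
      ultimately show ?thesis by simp
    qed
    have i1: "integrable lborel (\<lambda>z::'a. h (x + z) * KK \<eta> z)"
    proof (rule Bochner_Integration.integrable_bound[where f="\<lambda>z::'a. h (x + z)"])
      show "integrable lborel (\<lambda>z::'a. h (x + z))"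
        using integrable_translate[OF h, of x] by (simp add: add.commute)
      show "AE z in lborel. norm (h (x + z) * KK \<eta> z) \<le> norm (h (x + z))"
      proof (intro AE_I2)
        fix z :: 'a
        have "\<bar>KK \<eta> z\<bar> \<le> 1" using KK_le1[OF \<eta>, of z] KK_pos[of \<eta> z] by simp
        then show "norm (h (x + z) * KK \<eta> z) \<le> norm (h (x + z))"
          by (simp add: abs_mult mult_left_le)
      qed
    qed measurable
    have i2: "integrable lborel (\<lambda>z::'a. h x * KK \<eta> z)" using KKi by (intro integrable_mult_right)
    have pt: "(h (x + z) - h x) * (KK \<eta> z / c) = (h (x + z) * KK \<eta> z - h x * KK \<eta> z) / c" for z
      by (simp add: field_simps)
    have iF: "integrable lborel (\<lambda>z::'a. (h (x + z) - h x) * (KK \<eta> z / c))"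
      unfolding pt using i1 i2 by (intro integrable_divide_zero Bochner_Integration.integrable_diff)
    have "(\<integral>z. (h (x + z) - h x) * (KK \<eta> z / c) \<partial>lborel)
        = (\<integral>z. (h (x + z) * KK \<eta> z - h x * KK \<eta> z) / c \<partial>lborel)"
      unfolding pt ..
    also have "\<dots> = ((\<integral>z. h (x + z) * KK \<eta> z \<partial>lborel) - h x * c) / c"
      using i1 i2 KKint by simp
    also have "\<dots> = (\<integral>y. h y * KK \<eta> (x - y) \<partial>lborel) / c - h x"
      using c tr by (simp add: field_simps)
    finally have eq: "(\<integral>y. h y * KK \<eta> (x - y) \<partial>lborel) / c - h x = (\<integral>z. (h (x + z) - h x) * (KK \<eta> z / c) \<partial>lborel)"
      by simp
    have "ennreal \<bar>(\<integral>y. h y * KK \<eta> (x - y) \<partial>lborel) / c - h x\<bar>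
        \<le> (\<integral>\<^sup>+z. ennreal (norm ((h (x + z) - h x) * (KK \<eta> z / c))) \<partial>lborel)"
      unfolding eq using integral_norm_bound_ennreal[OF iF] by simp
    also have "\<dots> = (\<integral>\<^sup>+z. ennreal (KK \<eta> z / c) * ennreal \<bar>h (x + z) - h x\<bar> \<partial>lborel)"
    proof (intro nn_integral_cong)
      fix z :: 'a
      have p: "KK \<eta> z / c > 0" using c KK_pos[of \<eta> z] by simp
      have e1: "norm ((h (x + z) - h x) * (KK \<eta> z / c)) = (KK \<eta> z / c) * \<bar>h (x + z) - h x\<bar>"
        using p by (simp only: real_norm_def abs_mult abs_of_pos[OF p] mult.commute)
      have e2: "ennreal ((KK \<eta> z / c) * \<bar>h (x + z) - h x\<bar>) = ennreal (KK \<eta> z / c) * ennreal \<bar>h (x + z) - h x\<bar>"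
        by (rule ennreal_mult) (use p in auto)
      show "ennreal (norm ((h (x + z) - h x) * (KK \<eta> z / c))) = ennreal (KK \<eta> z / c) * ennreal \<bar>h (x + z) - h x\<bar>"
        unfolding e1 by (rule e2)
    qed
    finally show ?thesis .
  qed
  define F where "F x z = ennreal (KK \<eta> z / c) * ennreal \<bar>h (x + z) - h x\<bar>" for x z :: 'a
  have Fm: "case_prod (\<lambda>z x. F x z) \<in> borel_measurable (lborel \<Otimes>\<^sub>M lborel)"
    unfolding F_def by measurable
  have B: "(\<integral>\<^sup>+x. ennreal \<bar>(\<integral>y. h y * KK \<eta> (x - y) \<partial>lborel) / c - h x\<bar> \<partial>lborel)
      \<le> (\<integral>\<^sup>+x. (\<integral>\<^sup>+z. F x z \<partial>lborel) \<partial>lborel)"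
    unfolding F_def by (intro nn_integral_mono A)
  also have "\<dots> = (\<integral>\<^sup>+z. (\<integral>\<^sup>+x. F x z \<partial>lborel) \<partial>lborel)"
    using lborel_pair.Fubini'[OF Fm] by simp
  also have "\<dots> \<le> (\<integral>\<^sup>+z. ennreal (KK \<eta> z / c) * ennreal (e + 2 * N * indicator {z. \<delta> \<le> norm z} z) \<partial>(lborel::'a measure))"
  proof (intro nn_integral_mono)
    fix z :: 'a
    have iz: "integrable lborel (\<lambda>x. \<bar>h (x + z) - h x\<bar>)"
      using integrable_translate[OF h, of z] h by auto
    have C: "(\<integral>\<^sup>+x. F x z \<partial>lborel) = ennreal (KK \<eta> z / c) * (\<integral>\<^sup>+x. ennreal \<bar>h (x + z) - h x\<bar> \<partial>lborel)"
      unfolding F_def by (rule nn_integral_cmult) measurable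
    have om: "(\<integral>\<^sup>+x. ennreal \<bar>h (x + z) - h x\<bar> \<partial>lborel) = ennreal (\<integral>x. \<bar>h (x + z) - h x\<bar> \<partial>lborel)"
      by (rule nn_integral_eq_integral[OF iz]) auto
    have D: "(\<integral>x. \<bar>h (x + z) - h x\<bar> \<partial>lborel) \<le> e + 2 * N * indicator {z. \<delta> \<le> norm z} z"
    proof (cases "norm z < \<delta>")
      case True
      then show ?thesis using h\<delta>[OF True] by (simp add: indicator_def)
    next
      case False
      have ih: "integrable lborel (\<lambda>x. \<bar>h (x + z)\<bar>)" using integrable_translate[OF h, of z] by auto
      have "(\<integral>x. \<bar>h (x + z) - h x\<bar> \<partial>lborel) \<le> (\<integral>x. \<bar>h (x + z)\<bar> + \<bar>h x\<bar> \<partial>lborel)"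
        by (rule integral_mono) (use iz ih h in auto)
      also have "\<dots> = (\<integral>x. \<bar>h (x + z)\<bar> \<partial>lborel) + N"
        unfolding N_def using ih h by simp
      also have "(\<integral>x. \<bar>h (x + z)\<bar> \<partial>lborel) = N"
        unfolding N_def by (rule integral_translate[of "\<lambda>x. \<bar>h x\<bar>"]) auto
      finally show ?thesis using False e by (simp add: indicator_def)
    qed
    show "(\<integral>\<^sup>+x. F x z \<partial>lborel) \<le> ennreal (KK \<eta> z / c) * ennreal (e + 2 * N * indicator {z. \<delta> \<le> norm z} z)"
      unfolding C om using D by (intro mult_left_mono) (auto intro: ennreal_leI)
  qed
  also have "\<dots> = ennreal (e + 2 * N * (tl / c))"
  proof -
    have nn: "0 \<le> e + 2 * N * indicator {z. \<delta> \<le> norm z} z" for z :: 'a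
      using e N0 by (simp add: indicator_def)
    have "(\<integral>\<^sup>+z. ennreal (KK \<eta> z / c) * ennreal (e + 2 * N * indicator {z. \<delta> \<le> norm z} z) \<partial>(lborel::'a measure))
        = (\<integral>\<^sup>+z. ennreal (e / c * KK \<eta> z + 2 * N / c * (indicator {z. \<delta> \<le> norm z} z * KK \<eta> z)) \<partial>(lborel::'a measure))"
    proof (intro nn_integral_cong)
      fix z :: 'a
      have "ennreal (KK \<eta> z / c) * ennreal (e + 2 * N * indicator {z. \<delta> \<le> norm z} z)
          = ennreal (KK \<eta> z / c * (e + 2 * N * indicator {z. \<delta> \<le> norm z} z))"
        by (rule ennreal_mult[symmetric]) (use c KK_pos[of \<eta> z] nn[of z] in auto)
      also have "KK \<eta> z / c * (e + 2 * N * indicator {z. \<delta> \<le> norm z} z)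
          = e / c * KK \<eta> z + 2 * N / c * (indicator {z. \<delta> \<le> norm z} z * KK \<eta> z)"
        using c by (simp add: field_simps)
      finally show "ennreal (KK \<eta> z / c) * ennreal (e + 2 * N * indicator {z. \<delta> \<le> norm z} z)
          = ennreal (e / c * KK \<eta> z + 2 * N / c * (indicator {z. \<delta> \<le> norm z} z * KK \<eta> z))" .
    qed
    also have "\<dots> = ennreal (\<integral>z. e / c * KK \<eta> z + 2 * N / c * (indicator {z. \<delta> \<le> norm z} z * KK \<eta> z) \<partial>(lborel::'a measure))"
    proof (rule nn_integral_eq_integral)
      show "integrable lborel (\<lambda>z::'a. e / c * KK \<eta> z + 2 * N / c * (indicator {z. \<delta> \<le> norm z} z * KK \<eta> z))"
        using KKi tail_integrable[OF \<eta>, of \<delta>] by (intro Bochner_Integration.integrable_add integrable_mult_right)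
      show "AE z in lborel. 0 \<le> e / c * KK \<eta> z + 2 * N / c * (indicator {z. \<delta> \<le> norm (z::'a)} z * KK \<eta> z)"
        using e N0 c by (intro AE_I2 add_nonneg_nonneg mult_nonneg_nonneg) (auto simp: less_imp_le[OF KK_pos])
    qed
    also have "(\<integral>z. e / c * KK \<eta> z + 2 * N / c * (indicator {z. \<delta> \<le> norm z} z * KK \<eta> z) \<partial>(lborel::'a measure))
        = e / c * c + 2 * N / c * tl"
    proof -
      have "(\<integral>z. e / c * KK \<eta> z + 2 * N / c * (indicator {z. \<delta> \<le> norm z} z * KK \<eta> z) \<partial>(lborel::'a measure))
          = (\<integral>z. e / c * KK \<eta> z \<partial>(lborel::'a measure)) + (\<integral>z. 2 * N / c * (indicator {z. \<delta> \<le> norm z} z * KK \<eta> z) \<partial>(lborel::'a measure))"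
      proof (rule Bochner_Integration.integral_add)
        show "integrable lborel (\<lambda>z::'a. e / c * KK \<eta> z)" using KKi by (intro integrable_mult_right)
        show "integrable lborel (\<lambda>z::'a. 2 * N / c * (indicator {z. \<delta> \<le> norm z} z * KK \<eta> z))"
          using tail_integrable[OF \<eta>, of \<delta>] by (intro integrable_mult_right)
      qed
      also have "\<dots> = e / c * c + 2 * N / c * tl"
        unfolding integral_mult_right_zero KKint tl_def ..
      finally show ?thesis .
    qed
    also have "e / c * c + 2 * N / c * tl = e + 2 * N * (tl / c)" using c by simp
    finally show ?thesis .
  qed
  finally show ?thesis unfolding c_def tl_def N_def .
qed

lemma tv_bound:
  fixes P Q :: "'a::euclidean_space \<Rightarrow> real"
  assumes P: "integrable lborel P" and Q: "integrable lborel Q" and Q0: "\<And>x. Q x \<ge> 0"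
    and Z: "(\<integral>x. Q x \<partial>lborel) > 0"
    and L: "(\<integral>x. \<bar>P x - Q x\<bar> \<partial>lborel) \<le> (\<integral>x. Q x \<partial>lborel) / 2"
  shows "(1/2) * (\<integral>x. \<bar>P x / (\<integral>x. P x \<partial>lborel) - Q x / (\<integral>x. Q x \<partial>lborel)\<bar> \<partial>lborel)
      \<le> 2 * (\<integral>x. \<bar>P x - Q x\<bar> \<partial>lborel) / (\<integral>x. Q x \<partial>lborel)"
proof -
  define Zq where "Zq = (\<integral>x. Q x \<partial>lborel)"
  define Zp where "Zp = (\<integral>x. P x \<partial>lborel)"
  define Lp where "Lp = (\<integral>x. \<bar>P x - Q x\<bar> \<partial>lborel)"
  have iPQ: "integrable lborel (\<lambda>x. \<bar>P x - Q x\<bar>)" using P Q by auto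
  have "\<bar>Zp - Zq\<bar> = \<bar>\<integral>x. P x - Q x \<partial>lborel\<bar>" unfolding Zp_def Zq_def using P Q by simp
  also have "\<dots> \<le> Lp" unfolding Lp_def
    by (rule integral_abs_bound_integral) (use P Q iPQ in auto)
  finally have dZ: "\<bar>Zp - Zq\<bar> \<le> Lp" .
  have Zq0: "Zq > 0" using Z by (simp add: Zq_def)
  have L2: "Lp \<le> Zq / 2" using L by (simp add: Lp_def Zq_def)
  have Lp0: "Lp \<ge> 0" unfolding Lp_def by (intro integral_nonneg_AE) auto
  have Zp2: "Zp \<ge> Zq / 2" using dZ L2 by linarith
  then have Zp0: "Zp > 0" using Zq0 by linarith
  have pw: "\<bar>P x / Zp - Q x / Zq\<bar> \<le> \<bar>P x - Q x\<bar> / Zp + Q x * (\<bar>Zq - Zp\<bar> / (Zp * Zq))" for x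
  proof -
    have "P x / Zp - Q x / Zq = (P x - Q x) / Zp + Q x * ((Zq - Zp) / (Zp * Zq))"
      using Zp0 Zq0 by (simp add: field_simps)
    also have "\<bar>\<dots>\<bar> \<le> \<bar>(P x - Q x) / Zp\<bar> + \<bar>Q x * ((Zq - Zp) / (Zp * Zq))\<bar>" by (rule abs_triangle_ineq)
    also have "\<dots> = \<bar>P x - Q x\<bar> / Zp + Q x * (\<bar>Zq - Zp\<bar> / (Zp * Zq))"
      using Zp0 Zq0 Q0[of x] by (simp add: abs_mult abs_divide)
    finally show ?thesis .
  qed
  have i1: "integrable lborel (\<lambda>x. \<bar>P x - Q x\<bar> / Zp)" using iPQ by auto
  have i2: "integrable lborel (\<lambda>x. Q x * (\<bar>Zq - Zp\<bar> / (Zp * Zq)))" using Q by auto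
  have i0: "integrable lborel (\<lambda>x. \<bar>P x / Zp - Q x / Zq\<bar>)" using P Q by auto
  have "(\<integral>x. \<bar>P x / Zp - Q x / Zq\<bar> \<partial>lborel)
      \<le> (\<integral>x. \<bar>P x - Q x\<bar> / Zp + Q x * (\<bar>Zq - Zp\<bar> / (Zp * Zq)) \<partial>lborel)"
    by (rule integral_mono) (use i0 i1 i2 pw in auto)
  also have "\<dots> = (\<integral>x. \<bar>P x - Q x\<bar> / Zp \<partial>lborel) + (\<integral>x. Q x * (\<bar>Zq - Zp\<bar> / (Zp * Zq)) \<partial>lborel)"
    using i1 i2 by simp
  also have "\<dots> = Lp / Zp + Zq * (\<bar>Zq - Zp\<bar> / (Zp * Zq))"
    unfolding Lp_def Zq_def by simp
  also have "\<dots> = (Lp + \<bar>Zq - Zp\<bar>) / Zp"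
    using Zp0 Zq0 by (simp add: field_simps)
  also have "\<dots> \<le> (2 * Lp) / Zp"
    using dZ Zp0 by (intro divide_right_mono) (auto simp: abs_minus_commute)
  also have "\<dots> \<le> (2 * Lp) / (Zq / 2)"
    using Zp2 Zq0 Lp0 by (intro divide_left_mono) auto
  finally have "(\<integral>x. \<bar>P x / Zp - Q x / Zq\<bar> \<partial>lborel) \<le> 4 * Lp / Zq" by simp
  then show ?thesis unfolding Zp_def[symmetric] Zq_def[symmetric] Lp_def[symmetric] by simp
qed



lemma exp_eventually_small:
  fixes \<delta> t :: real
  assumes "\<delta> > 0" "t > 0"
  shows "\<forall>\<^sub>F \<eta> in at_right 0. exp (- \<delta>\<^sup>2 / (4 * \<eta>)) < t"
proof -
  define b where "b = \<delta>\<^sup>2 / (4 * (\<bar>ln t\<bar> + 1))"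
  have b: "b > 0" using assms by (simp add: b_def)
  have "exp (- \<delta>\<^sup>2 / (4 * \<eta>)) < t" if "0 < \<eta>" "\<eta> < b" for \<eta>
  proof -
    have "4 * \<eta> * (\<bar>ln t\<bar> + 1) < \<delta>\<^sup>2"
      using that unfolding b_def by (simp add: field_simps)
    then have "\<bar>ln t\<bar> + 1 < \<delta>\<^sup>2 / (4 * \<eta>)"
      using that by (simp add: field_simps)
    then have "- \<delta>\<^sup>2 / (4 * \<eta>) < ln t" by linarith
    then have "exp (- \<delta>\<^sup>2 / (4 * \<eta>)) < exp (ln t)" by simp
    then show ?thesis using assms by simp
  qed
  then show ?thesis using b by (intro eventually_at_rightI[of 0 b]) auto
qed

lemma piX_eq:
  fixes f g :: "'a::euclidean_space \<Rightarrow> real"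
  assumes "\<eta> > 0"
  shows "piX f g \<eta> x = exp (- f x) * ((\<integral>y. exp (- g y) * KK \<eta> (x - y) \<partial>lborel) / cK \<eta> TYPE('a))
     / (\<integral>z. exp (- f z) * ((\<integral>y. exp (- g y) * KK \<eta> (z - y) \<partial>lborel) / cK \<eta> TYPE('a)) \<partial>lborel)"
proof -
  define c where "c = cK \<eta> TYPE('a)"
  have c: "c > 0" using cK_pos[OF assms] by (simp add: c_def)
  define P where "P x = exp (- f x) * ((\<integral>y. exp (- g y) * KK \<eta> (x - y) \<partial>lborel) / c)" for x
  have un: "piX_unnorm f g \<eta> x = c * P x" for x
  proof -
    have "(\<lambda>y. exp (- f x - g y - (norm (x - y))\<^sup>2 / (2 * \<eta>))) = (\<lambda>y. exp (- f x) * (exp (- g y) * KK \<eta> (x - y)))"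
      by (auto simp: fun_eq_iff KK_def exp_add[symmetric])
    then have "piX_unnorm f g \<eta> x = exp (- f x) * (\<integral>y. exp (- g y) * KK \<eta> (x - y) \<partial>lborel)"
      unfolding piX_unnorm_def by simp
    then show ?thesis using c by (simp add: P_def)
  qed
  have "piX f g \<eta> x = c * P x / (c * (\<integral>z. P z \<partial>lborel))"
    unfolding piX_def un by simp
  also have "\<dots> = P x / (\<integral>z. P z \<partial>lborel)" using c by simp
  finally show ?thesis unfolding P_def c_def .
qed

theorem mainTheorem9:
  fixes f g :: "'a::euclidean_space \<Rightarrow> real"
  assumes "f \<in> borel_measurable lborel"
      and "g \<in> borel_measurable lborel"
      and "integrable lborel (\<lambda>x. exp (- g x))"
      and "\<exists>C. AE x in lborel. exp (- f x) \<le> C"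
      and "(\<integral>x. exp (- f x - g x) \<partial>lborel) > 0"
  shows "((\<lambda>\<eta>. TV (piX f g \<eta>) (nu_dens f g)) \<longlongrightarrow> 0) (at_right 0)"
proof (rule tendstoI)
  fix \<epsilon> :: real assume \<epsilon>: "\<epsilon> > 0"
  define h where "h = (\<lambda>x. exp (- g x))"
  define F where "F = (\<lambda>x. exp (- f x))"
  have fm[measurable]: "f \<in> borel_measurable borel" and gm[measurable]: "g \<in> borel_measurable borel"
    using assms(1,2) by auto
  have hm[measurable]: "h \<in> borel_measurable borel" unfolding h_def by measurable
  have Fm[measurable]: "F \<in> borel_measurable borel" unfolding F_def by measurable
  have hi: "integrable lborel h" using assms(3) by (simp add: h_def)
  have h0: "h x > 0" for x by (simp add: h_def)
  have F0: "F x > 0" for x by (simp add: F_def)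
  obtain C where C: "AE x in lborel. F x \<le> C" using assms(4) by (auto simp: F_def)
  define C1 where "C1 = max C 1"
  have C1: "C1 > 0" by (simp add: C1_def)
  have FC1: "AE x in lborel. F x \<le> C1" using C by eventually_elim (auto simp: C1_def)
  define Q where "Q = (\<lambda>x. F x * h x)"
  have Q0: "Q x \<ge> 0" for x using F0[of x] h0[of x] by (simp add: Q_def)
  have Qi: "integrable lborel Q"
  proof (rule Bochner_Integration.integrable_bound[where f="\<lambda>x. C1 * h x"])
    show "integrable lborel (\<lambda>x. C1 * h x)" using hi by (intro integrable_mult_right)
    show "AE x in lborel. norm (Q x) \<le> norm (C1 * h x)"
      using FC1
    proof eventually_elim
      case (elim x)
      then show ?case using F0[of x] h0[of x] C1 by (simp add: Q_def abs_mult mult_right_mono)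
    qed
  qed (simp add: Q_def)
  have QZ: "(\<integral>x. Q x \<partial>lborel) = (\<integral>x. exp (- f x - g x) \<partial>lborel)"
    unfolding Q_def F_def h_def by (simp add: exp_add[symmetric])
  define Zq where "Zq = (\<integral>x. Q x \<partial>lborel)"
  have Zq: "Zq > 0" using assms(5) QZ by (simp add: Zq_def)
  define N where "N = (\<integral>x. \<bar>h x\<bar> \<partial>lborel)"
  have N0: "N \<ge> 0" unfolding N_def by (intro integral_nonneg_AE) auto
  define \<theta> where "\<theta> = min (Zq / 2) (\<epsilon> * Zq / 4)"
  have \<theta>: "\<theta> > 0" using Zq \<epsilon> by (simp add: \<theta>_def)
  define e' where "e' = \<theta> / (2 * C1)"
  have e': "e' > 0" using \<theta> C1 by (simp add: e'_def)
  obtain \<delta> where \<delta>: "\<delta> > 0" "\<And>z. norm z < \<delta> \<Longrightarrow> (\<integral>x. \<bar>h (x + z) - h x\<bar> \<partial>lborel) < e'"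
    using tc_integrable[OF hi] e' unfolding tc_def by blast
  define s where "s = sqrt 2 ^ DIM('a)"
  have s: "s > 0" by (simp add: s_def)
  define t where "t = \<theta> / (2 * C1 * (2 * N * s + 1))"
  have Ns: "2 * N * s + 1 > 0" using N0 s by (simp add: add_nonneg_pos)
  have t: "t > 0" unfolding t_def using \<theta> C1 Ns by (intro divide_pos_pos mult_pos_pos) auto
  have ev: "\<forall>\<^sub>F \<eta> in at_right 0. exp (- \<delta>\<^sup>2 / (4 * \<eta>)) < t"
    by (rule exp_eventually_small[OF \<delta>(1) t])
  have ev0: "\<forall>\<^sub>F \<eta> in at_right 0. (0::real) < \<eta>" by (rule eventually_at_right_less)
  show "\<forall>\<^sub>F \<eta> in at_right 0. dist (TV (piX f g \<eta>) (nu_dens f g)) 0 < \<epsilon>"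
    using ev ev0
  proof eventually_elim
    case (elim \<eta>)
    then have \<eta>: "\<eta> > 0" and ex: "exp (- \<delta>\<^sup>2 / (4 * \<eta>)) < t" by auto
    define u where "u = (\<lambda>x. (\<integral>y. h y * KK \<eta> (x - y) \<partial>lborel) / cK \<eta> TYPE('a))"
    have um[measurable]: "u \<in> borel_measurable lborel"
    proof -
      have "(\<lambda>x. \<integral>y. h y * KK \<eta> (x - y) \<partial>lborel) \<in> borel_measurable lborel"
        by (rule lborel.borel_measurable_lebesgue_integral) measurable
      then show ?thesis unfolding u_def by measurable
    qed
    define B where "B = e' + 2 * N * (exp (- \<delta>\<^sup>2 / (4 * \<eta>)) * s)"
    have B0: "B \<ge> 0" using e' N0 s by (simp add: B_def)
    have conv: "(\<integral>\<^sup>+x. ennreal \<bar>u x - h x\<bar> \<partial>lborel) \<le> ennreal B"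
    proof -
      have "(\<integral>\<^sup>+x. ennreal \<bar>u x - h x\<bar> \<partial>lborel)
          \<le> ennreal (e' + 2 * N * ((\<integral>z. indicator {z. \<delta> \<le> norm z} z * KK \<eta> z \<partial>(lborel :: 'a measure)) / cK \<eta> TYPE('a)))"
        unfolding u_def N_def
        by (rule conv_L1[OF hi \<eta> \<delta>(1)]) (use e' \<delta>(2) in \<open>auto intro: less_imp_le\<close>)
      also have "\<dots> \<le> ennreal B"
        unfolding B_def s_def using tail_ratio[OF \<eta>, of \<delta>, where 'a='a] \<delta>(1) N0
        by (intro ennreal_leI add_left_mono mult_left_mono) auto
      finally show ?thesis .
    qed
    have uhi: "integrable lborel (\<lambda>x. u x - h x)"
    proof (subst integrable_iff_bounded, intro conjI)
      show "(\<lambda>x. u x - h x) \<in> borel_measurable lborel" by measurable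
      have "(\<integral>\<^sup>+x. ennreal \<bar>u x - h x\<bar> \<partial>lborel) < top" using le_less_trans[OF conv ennreal_less_top] .
      then show "(\<integral>\<^sup>+x. ennreal (norm (u x - h x)) \<partial>lborel) < \<infinity>" by simp
    qed
    have Lu: "(\<integral>x. \<bar>u x - h x\<bar> \<partial>lborel) \<le> B"
    proof -
      have "ennreal (\<integral>x. \<bar>u x - h x\<bar> \<partial>lborel) = (\<integral>\<^sup>+x. ennreal \<bar>u x - h x\<bar> \<partial>lborel)"
        by (rule nn_integral_eq_integral[symmetric]) (use uhi in auto)
      then have "ennreal (\<integral>x. \<bar>u x - h x\<bar> \<partial>lborel) \<le> ennreal B" using conv by simp
      then show ?thesis using B0 by (simp add: ennreal_le_iff)
    qed
    have ui: "integrable lborel u"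
    proof -
      have "integrable lborel (\<lambda>x. (u x - h x) + h x)" using uhi hi by (rule Bochner_Integration.integrable_add)
      then show ?thesis by simp
    qed
    define P where "P = (\<lambda>x. F x * u x)"
    have Pi: "integrable lborel P"
    proof (rule Bochner_Integration.integrable_bound[where f="\<lambda>x. C1 * u x"])
      show "integrable lborel (\<lambda>x. C1 * u x)" using ui by (intro integrable_mult_right)
      show "AE x in lborel. norm (P x) \<le> norm (C1 * u x)"
        using FC1
      proof eventually_elim
        case (elim x)
        then show ?case using F0[of x] C1 by (simp add: P_def abs_mult mult_right_mono)
      qed
    qed (simp add: P_def)
    have L: "(\<integral>x. \<bar>P x - Q x\<bar> \<partial>lborel) \<le> C1 * (\<integral>x. \<bar>u x - h x\<bar> \<partial>lborel)"
    proof -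
      have "(\<integral>x. \<bar>P x - Q x\<bar> \<partial>lborel) \<le> (\<integral>x. C1 * \<bar>u x - h x\<bar> \<partial>lborel)"
      proof (rule integral_mono_AE)
        show "integrable lborel (\<lambda>x. \<bar>P x - Q x\<bar>)" using Pi Qi by auto
        show "integrable lborel (\<lambda>x. C1 * \<bar>u x - h x\<bar>)" using uhi by (intro integrable_mult_right) auto
        show "AE x in lborel. \<bar>P x - Q x\<bar> \<le> C1 * \<bar>u x - h x\<bar>"
          using FC1
        proof eventually_elim
          case (elim x)
          have "\<bar>P x - Q x\<bar> = F x * \<bar>u x - h x\<bar>"
            using F0[of x] by (simp add: P_def Q_def right_diff_distrib[symmetric] abs_mult)
          also have "\<dots> \<le> C1 * \<bar>u x - h x\<bar>" using elim by (intro mult_right_mono) auto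
          finally show ?case .
        qed
      qed
      also have "\<dots> = C1 * (\<integral>x. \<bar>u x - h x\<bar> \<partial>lborel)" by simp
      finally show ?thesis .
    qed
    have C1B: "C1 * B < \<theta>"
    proof -
      define r where "r = 2 * N * s"
      have r0: "r \<ge> 0" using N0 s by (simp add: r_def)
      have "C1 * B = \<theta> / 2 + C1 * (r * exp (- \<delta>\<^sup>2 / (4 * \<eta>)))"
        using C1 by (simp add: B_def e'_def r_def field_simps)
      also have "C1 * (r * exp (- \<delta>\<^sup>2 / (4 * \<eta>))) \<le> C1 * (r * t)"
        using ex C1 r0 by (intro mult_left_mono) auto
      also have "C1 * (r * t) = \<theta> / 2 * (r / (r + 1))"
      proof -
        have tr: "t = \<theta> / (2 * C1 * (r + 1))" by (simp add: t_def r_def)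
        have "r + 1 \<noteq> 0" "C1 \<noteq> 0" "2 * C1 * (r + 1) \<noteq> 0" using r0 C1 by auto
        then show ?thesis unfolding tr by (simp add: field_simps)
      qed
      also have "\<theta> / 2 * (r / (r + 1)) < \<theta> / 2 * 1"
        using \<theta> r0 by (intro mult_strict_left_mono) auto
      finally show ?thesis by simp
    qed
    have Lth: "(\<integral>x. \<bar>P x - Q x\<bar> \<partial>lborel) < \<theta>"
    proof -
      have "C1 * (\<integral>x. \<bar>u x - h x\<bar> \<partial>lborel) \<le> C1 * B" using Lu C1 by (intro mult_left_mono) auto
      then show ?thesis using L C1B by linarith
    qed
    have Lhalf: "(\<integral>x. \<bar>P x - Q x\<bar> \<partial>lborel) \<le> (\<integral>x. Q x \<partial>lborel) / 2"
      using Lth unfolding Zq_def[symmetric] \<theta>_def by linarith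
    have tvb: "(1/2) * (\<integral>x. \<bar>P x / (\<integral>x. P x \<partial>lborel) - Q x / (\<integral>x. Q x \<partial>lborel)\<bar> \<partial>lborel)
        \<le> 2 * (\<integral>x. \<bar>P x - Q x\<bar> \<partial>lborel) / (\<integral>x. Q x \<partial>lborel)"
      by (rule tv_bound[OF Pi Qi Q0]) (use Zq Lhalf in \<open>auto simp: Zq_def\<close>)
    have piXe: "piX f g \<eta> x = P x / (\<integral>x. P x \<partial>lborel)" for x
      unfolding piX_eq[OF \<eta>] P_def u_def F_def h_def ..
    have nue: "nu_dens f g x = Q x / (\<integral>x. Q x \<partial>lborel)" for x
      unfolding nu_dens_def QZ by (simp add: Q_def F_def h_def exp_add[symmetric])
    have TVe: "TV (piX f g \<eta>) (nu_dens f g) = (1/2) * (\<integral>x. \<bar>P x / (\<integral>x. P x \<partial>lborel) - Q x / (\<integral>x. Q x \<partial>lborel)\<bar> \<partial>lborel)"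
      unfolding TV_def piXe nue ..
    have TV0: "TV (piX f g \<eta>) (nu_dens f g) \<ge> 0"
      unfolding TV_def by (intro mult_nonneg_nonneg integral_nonneg_AE) auto
    have "2 * (\<integral>x. \<bar>P x - Q x\<bar> \<partial>lborel) / (\<integral>x. Q x \<partial>lborel) < 2 * \<theta> / Zq"
      using Lth Zq unfolding Zq_def[symmetric] by (intro divide_strict_right_mono) auto
    also have "2 * \<theta> / Zq \<le> 2 * (\<epsilon> * Zq / 4) / Zq"
    proof (intro divide_right_mono)
      have "\<theta> \<le> \<epsilon> * Zq / 4" unfolding \<theta>_def by (rule min.cobounded2)
      then show "2 * \<theta> \<le> 2 * (\<epsilon> * Zq / 4)" by linarith
    qed (use Zq in auto)
    also have "\<dots> < \<epsilon>" using Zq \<epsilon> by simp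
    finally have "TV (piX f g \<eta>) (nu_dens f g) < \<epsilon>" using TVe tvb by linarith
    then show ?case using TV0 by (simp add: dist_real_def)
  qed
qed

end
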